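(* Let $K\subseteq\mathbb{R}$ be a field, $K^+=\{x\in K:x>0\}$, and suppose $K^+=H_1\sqcup H_2\sqcup\cdots\sqcup H_\lambda$ is a partition of $K^+$ into pairwise disjoint subsets each closed under addition and multiplication (indexed by some index set of size $\lambda$). Then: (a) If $a, a+q\in H_1$ for some $q\in\mathbb{Q}^+$, then $a+r\in H_1$ for every $r\in\mathbb{Q}^+$. (b) If $\lambda$ is finite, then for every $a\in K^+$ and every $q\in\mathbb{Q}$ with $a+q>0$, the elements $a$ and $a+q$ lie in the same part of the partition. *)

theory Defs
  imports Complex_Main
begin

definition real_subfield :: "real set \<Rightarrow> bool" where
  "real_subfield K \<longleftrightarrow> 0 \<in> K \<and> 1 \<in> K \<and>
     (\<forall>x\<in>K. \<forall>y\<in>K. x + y \<in> K \<and> x * y \<in> K) \<and>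
     (\<forall>x\<in>K. - x \<in> K) \<and> (\<forall>x\<in>K. x \<noteq> 0 \<longrightarrow> inverse x \<in> K)"

definition pos_part :: "real set \<Rightarrow> real set" where
  "pos_part K = {x \<in> K. x > 0}"

end

theory Submission
  imports Defs
begin

lemma nat_in_K: "real_subfield K \<Longrightarrow> real n \<in> K"
  by (induction n) (auto simp: real_subfield_def)

lemma int_in_K: "real_subfield K \<Longrightarrow> real_of_int z \<in> K"
proof (cases "z \<ge> 0")
  case True
  assume f: "real_subfield K"
  then have "real (nat z) \<in> K" by (rule nat_in_K)
  with True show ?thesis by simp
next
  case False
  assume f: "real_subfield K"
  then have "real (nat (-z)) \<in> K" by (rule nat_in_K)
  with f have "- real (nat (-z)) \<in> K" by (simp add: real_subfield_def)
  with False show ?thesis by simp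
qed

lemma rat_in_K: assumes f: "real_subfield K" and r: "r \<in> \<rat>" shows "r \<in> K"
proof -
  obtain a b where ab: "r = real_of_int a / real_of_int b" using r by (auto elim: Rats_cases')
  have "real_of_int a \<in> K" "real_of_int b \<in> K" using f int_in_K by auto
  moreover have "inverse (real_of_int b) \<in> K"
    using f \<open>real_of_int b \<in> K\<close> by (cases "b = 0") (auto simp: real_subfield_def)
  ultimately show ?thesis using f ab by (simp add: real_subfield_def divide_inverse)
qed

theorem lemma3p1:
  fixes K :: "real set" and I :: "'i set" and H :: "'i \<Rightarrow> real set"
  assumes field: "real_subfield K"
    and cover: "(\<Union>i\<in>I. H i) = pos_part K"
    and disj: "\<And>i j. i \<in> I \<Longrightarrow> j \<in> I \<Longrightarrow> i \<noteq> j \<Longrightarrow> H i \<inter> H j = {}"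
    and add_closed: "\<And>i x y. i \<in> I \<Longrightarrow> x \<in> H i \<Longrightarrow> y \<in> H i \<Longrightarrow> x + y \<in> H i"
    and mult_closed: "\<And>i x y. i \<in> I \<Longrightarrow> x \<in> H i \<Longrightarrow> y \<in> H i \<Longrightarrow> x * y \<in> H i"
  shows "(\<forall>i\<in>I. \<forall>a q. q \<in> \<rat> \<and> q > 0 \<and> a \<in> H i \<and> a + q \<in> H i \<longrightarrow>
            (\<forall>r. r \<in> \<rat> \<and> r > 0 \<longrightarrow> a + r \<in> H i))
       \<and> (finite I \<longrightarrow>
            (\<forall>a\<in>pos_part K. \<forall>q\<in>\<rat>. a + q > 0 \<longrightarrow> (\<exists>i\<in>I. a \<in> H i \<and> a + q \<in> H i)))"
proof -
  have Kadd: "\<And>x y. x \<in> K \<Longrightarrow> y \<in> K \<Longrightarrow> x + y \<in> K"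
   and Kmul: "\<And>x y. x \<in> K \<Longrightarrow> y \<in> K \<Longrightarrow> x * y \<in> K"
   and Kneg: "\<And>x. x \<in> K \<Longrightarrow> - x \<in> K"
    using field by (auto simp: real_subfield_def)
  have QK: "\<And>r. r \<in> \<rat> \<Longrightarrow> r \<in> K" using rat_in_K[OF field] by blast
  have posK: "\<And>i x. i \<in> I \<Longrightarrow> x \<in> H i \<Longrightarrow> x \<in> K \<and> x > 0"
    using cover by (auto simp: pos_part_def)
  have part: "\<And>x. x \<in> K \<Longrightarrow> x > 0 \<Longrightarrow> \<exists>i\<in>I. x \<in> H i"
    using cover by (auto simp: pos_part_def)
  have uniq: "\<And>i j x. i \<in> I \<Longrightarrow> j \<in> I \<Longrightarrow> x \<in> H i \<Longrightarrow> x \<in> H j \<Longrightarrow> i = j"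
    using disj by blast
  have natmul: "\<And>i x n. i \<in> I \<Longrightarrow> x \<in> H i \<Longrightarrow> real (Suc n) * x \<in> H i"
  proof -
    fix i n and x :: real assume i: "i \<in> I" and x: "x \<in> H i"
    show "real (Suc n) * x \<in> H i"
    proof (induction n)
      case 0 then show ?case using x by simp
    next
      case (Suc n)
      have "real (Suc (Suc n)) * x = real (Suc n) * x + x" by (simp add: algebra_simps)
      then show ?case using add_closed[OF i Suc x] by simp
    qed
  qed
  have natmul': "\<And>i x n. i \<in> I \<Longrightarrow> x \<in> H i \<Longrightarrow> n > 0 \<Longrightarrow> real n * x \<in> H i"
    by (metis gr0_implies_Suc natmul)
  have scale: "\<And>i x c. i \<in> I \<Longrightarrow> x \<in> H i \<Longrightarrow> c \<in> \<rat> \<Longrightarrow> c > 0 \<Longrightarrow> c * x \<in> H i"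
  proof -
    fix i and x c :: real assume i: "i \<in> I" and x: "x \<in> H i" and c: "c \<in> \<rat>" "c > 0"
    obtain a b where ab: "b > 0" "c = real_of_int a / real_of_int b" using c(1) by (auto elim: Rats_cases')
    have "a > 0" using ab c(2) by (smt (verit) divide_nonpos_pos of_int_0_less_iff)
    define m where "m = nat a"
    define n where "n = nat b"
    have mn: "m > 0" "n > 0" "c = real m / real n" using ab \<open>a > 0\<close> by (auto simp: m_def n_def)
    have cK: "c * x \<in> K \<and> c * x > 0" using posK[OF i x] QK[OF c(1)] Kmul c(2) by auto
    then obtain j where j: "j \<in> I" "c * x \<in> H j" using part by blast
    have "real n * (c * x) \<in> H j" using natmul'[OF j mn(2)] .
    moreover have "real n * (c * x) = real m * x" using mn by simp
    moreover have "real m * x \<in> H i" using natmul'[OF i x mn(1)] .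
    ultimately have "j = i" using uniq i j by metis
    then show "c * x \<in> H i" using j by simp
  qed
  have sq: "\<And>i y. i \<in> I \<Longrightarrow> y \<in> K \<Longrightarrow> y > 0 \<Longrightarrow> y * y \<in> H i \<Longrightarrow> y \<in> H i"
  proof -
    fix i and y :: real assume i: "i \<in> I" and y: "y \<in> K" "y > 0" "y * y \<in> H i"
    obtain j where j: "j \<in> I" "y \<in> H j" using part y by blast
    then have "y * y \<in> H j" using mult_closed by blast
    then have "j = i" using uniq i j y by metis
    then show "y \<in> H i" using j by simp
  qed
  have conv: "\<And>i a Q r. i \<in> I \<Longrightarrow> a \<in> H i \<Longrightarrow> a + Q \<in> H i \<Longrightarrow> Q \<in> \<rat> \<Longrightarrow> r \<in> \<rat>
      \<Longrightarrow> 0 < r \<Longrightarrow> r < Q \<Longrightarrow> a + r \<in> H i"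
  proof -
    fix i and a Q r :: real assume i: "i \<in> I" and a: "a \<in> H i" "a + Q \<in> H i" and Q: "Q \<in> \<rat>" and r: "r \<in> \<rat>" "0 < r" "r < Q"
    have l1: "(1 - r / Q) \<in> \<rat>" "r / Q \<in> \<rat>" using Q r by auto
    have l2: "(1 - r / Q) > 0" "r / Q > 0" using r by auto
    have "(1 - r / Q) * a + (r / Q) * (a + Q) \<in> H i"
      using add_closed[OF i scale[OF i a(1) l1(1) l2(1)] scale[OF i a(2) l1(2) l2(2)]] .
    moreover have "(1 - r / Q) * a + (r / Q) * (a + Q) = a + r" using r by (simp add: field_simps)
    ultimately show "a + r \<in> H i" by simp
  qed
  have step: "\<And>i a q. i \<in> I \<Longrightarrow> a \<in> H i \<Longrightarrow> a + q \<in> H i \<Longrightarrow> q \<in> \<rat> \<Longrightarrow> q > 0 \<Longrightarrow> a + 2 * q \<in> H i"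
  proof -
    fix i and a q :: real assume i: "i \<in> I" and a: "a \<in> H i" "a + q \<in> H i" and q: "q \<in> \<rat>" "q > 0"
    have "a * a + (4 * q) * (a + q) \<in> H i"
      using add_closed[OF i mult_closed[OF i a(1) a(1)] scale[OF i a(2)]] q by auto
    moreover have "a * a + (4 * q) * (a + q) = (a + 2 * q) * (a + 2 * q)" by (simp add: algebra_simps)
    moreover have "a + 2 * q \<in> K" using posK[OF i a(1)] QK q Kadd by auto
    moreover have "a + 2 * q > 0" using posK[OF i a(1)] q by auto
    ultimately show "a + 2 * q \<in> H i" using sq[OF i] by metis
  qed
  have nsteps: "\<And>i a q n. i \<in> I \<Longrightarrow> a \<in> H i \<Longrightarrow> a + q \<in> H i \<Longrightarrow> q \<in> \<rat> \<Longrightarrow> q > 0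
      \<Longrightarrow> a + real (Suc n) * q \<in> H i \<and> a + real (Suc (Suc n)) * q \<in> H i"
  proof -
    fix i n and a q :: real assume i: "i \<in> I" and a: "a \<in> H i" "a + q \<in> H i" and q: "q \<in> \<rat>" "q > 0"
    show "a + real (Suc n) * q \<in> H i \<and> a + real (Suc (Suc n)) * q \<in> H i"
    proof (induction n)
      case 0 then show ?case using step[OF i a q] a by simp
    next
      case (Suc n)
      then have h1: "a + real (Suc n) * q \<in> H i" and h2: "(a + real (Suc n) * q) + q \<in> H i"
        by (auto simp: algebra_simps)
      have "(a + real (Suc n) * q) + 2 * q \<in> H i" using step[OF i h1 h2 q] .
      then show ?case using Suc by (auto simp: algebra_simps)
    qed
  qed
  have A: "\<And>i a q r. i \<in> I \<Longrightarrow> q \<in> \<rat> \<Longrightarrow> q > 0 \<Longrightarrow> a \<in> H i \<Longrightarrow> a + q \<in> H i \<Longrightarrow> r \<in> \<rat> \<Longrightarrow> r > 0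
      \<Longrightarrow> a + r \<in> H i"
  proof -
    fix i and a q r :: real assume i: "i \<in> I" and q: "q \<in> \<rat>" "q > 0" and a: "a \<in> H i" "a + q \<in> H i"
      and r: "r \<in> \<rat>" "r > 0"
    obtain n where n: "r < real n * q" using ex_less_of_nat_mult[OF q(2)] by blast
    have "a + real (Suc n) * q \<in> H i" using nsteps[OF i a q] by blast
    moreover have "r < real (Suc n) * q" using n q by (simp add: algebra_simps)
    ultimately show "a + r \<in> H i" using conv[OF i a(1) _ _ r(1) r(2)] q(1) by auto
  qed
  have B: "\<And>a q. finite I \<Longrightarrow> a \<in> K \<Longrightarrow> a > 0 \<Longrightarrow> q \<in> \<rat> \<Longrightarrow> q > 0 \<Longrightarrow> \<exists>i\<in>I. a \<in> H i \<and> a + q \<in> H i"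
  proof -
    fix a q :: real assume fin: "finite I" and a: "a \<in> K" "a > 0" and q: "q \<in> \<rat>" "q > 0"
    obtain t where t: "t \<in> \<rat>" "0 < t" "t < a" using Rats_dense_in_real[OF a(2)] by blast
    define b where "b = a - t"
    have bK: "b \<in> K" "b > 0" using a t QK[OF t(1)] Kadd[OF a(1) Kneg[OF QK[OF t(1)]]] by (auto simp: b_def)
    define f where "f n = (SOME i. i \<in> I \<and> b + t / real (Suc n) \<in> H i)" for n
    have fI: "f n \<in> I \<and> b + t / real (Suc n) \<in> H (f n)" for n
    proof -
      have "b + t / real (Suc n) \<in> K" using bK t QK Kadd by auto
      moreover have "b + t / real (Suc n) > 0" using bK t by (simp add: add_pos_pos)
      ultimately have "\<exists>i. i \<in> I \<and> b + t / real (Suc n) \<in> H i" using part by blast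
      then show ?thesis unfolding f_def by (rule someI_ex)
    qed
    have "\<not> inj_on f {..card I}"
    proof
      assume "inj_on f {..card I}"
      moreover have "f ` {..card I} \<subseteq> I" using fI by auto
      ultimately have "card {..card I} \<le> card I" using card_inj_on_le fin by blast
      then show False by simp
    qed
    then obtain m n where mn: "m \<noteq> n" "f m = f n" unfolding inj_on_def by blast
    have "\<exists>m n. m < n \<and> f m = f n" using mn by (metis linorder_neqE_nat)
    then obtain m n where mn: "m < n" "f m = f n" by blast
    define p where "p = f n"
    have p: "p \<in> I" "b + t / real (Suc n) \<in> H p" "b + t / real (Suc m) \<in> H p"
      using fI[of n] fI[of m] mn(2) unfolding p_def by metis+
    define s where "s = t / real (Suc n)"
    define d where "d = t / real (Suc m) - t / real (Suc n)"
    have d: "d \<in> \<rat>" "d > 0" using t mn by (auto simp: d_def frac_less2)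
    have sd: "b + s + d \<in> H p" using p by (simp add: s_def d_def)
    have "1 < real (Suc n)" using mn(1) by simp
    then have s: "s < t" "s \<in> \<rat>" using t by (auto simp: s_def divide_less_eq)
    have "b + s + (t - s) \<in> H p" using A[OF p(1) d(1) d(2) _ sd, of "t - s"] p s t by (simp add: s_def)
    moreover have "b + s + (t - s + q) \<in> H p" using A[OF p(1) d(1) d(2) _ sd, of "t - s + q"] p s t q
      by (simp add: s_def)
    ultimately show "\<exists>i\<in>I. a \<in> H i \<and> a + q \<in> H i" using p(1) by (auto simp: b_def algebra_simps)
  qed
  show ?thesis
  proof (intro conjI ballI allI impI)
    fix i and a q r :: real assume "i \<in> I" "q \<in> \<rat> \<and> 0 < q \<and> a \<in> H i \<and> a + q \<in> H i" "r \<in> \<rat> \<and> 0 < r"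
    then show "a + r \<in> H i" using A by blast
  next
    fix a q :: real assume fin: "finite I" and a: "a \<in> pos_part K" and q: "q \<in> \<rat>" and aq: "0 < a + q"
    have aK: "a \<in> K" "a > 0" using a by (auto simp: pos_part_def)
    consider "q > 0" | "q = 0" | "q < 0" by linarith
    then show "\<exists>i\<in>I. a \<in> H i \<and> a + q \<in> H i"
    proof cases
      case 1 then show ?thesis using B fin aK q by blast
    next
      case 2 then show ?thesis using part aK by auto
    next
      case 3
      have "a + q \<in> K" using aK q QK Kadd by auto
      then obtain i where "i \<in> I" "a + q \<in> H i" "a + q + (- q) \<in> H i"
        using B[OF fin _ aq, of "-q"] q 3 by auto
      then show ?thesis by auto
    qed
  qed
qed

end
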